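(* Let $A=D+N\in\mathcal{M}_n(\mathbb{H})$, where $D=\operatorname{diag}(d_1,\dots,d_n)$ with all $d_i\in\mathbb{R}$ and $N=[a_{ij}]$ is a strictly upper triangular (hence nilpotent) matrix whose graph $\mathcal{G}_N$ is a tree. Let $\underline{d}=\min_i d_i$, $\overline{d}=\max_i d_i$ and, for $d\in[\underline{d},\overline{d}]$, $$r(d)=\max\Big\{\sum_{i\ne j}\beta_i\beta_j|a_{ij}|:\ \sum_i d_i\beta_i^2=d,\ \beta\in\mathbb{S}^+_{\mathbb{R}^n}\Big\}.$$ Then $$W(A)=\bigcup_{d\in[\underline{d},\overline{d}]}\mathbb{D}_{\mathbb{H}}(d,r(d)).$$
   Context: $\mathbb{H}$ denotes the real quaternions, $|q|^2=qq^*$. The numerical range of $A\in\mathcal{M}_n(\mathbb{H})$ is $W(A)=\{\mathbf{x}^*A\mathbf{x}:\mathbf{x}\in\mathbb{H}^n,\ \mathbf{x}^*\mathbf{x}=1\}$. $\mathbb{D}_{\mathbb{H}}(c,r)=\{q\in\mathbb{H}:|q-c|\le r\}$. $\mathbb{S}^+_{\mathbb{R}^n}=\{\beta\in\mathbb{R}^n:\|\beta\|=1,\ \beta_i\ge0\ \forall i\}$. The graph $\mathcal{G}_N$ of $N=[a_{ij}]$ is the undirected graph on $\{1,\dots,n\}$ with an edge between $i$ and $j$ (a loop if $i=j$) whenever $a_{ij}\ne0$ or $a_{ji}\ne0$; $N$ is a tree if $\mathcal{G}_N$ is connected and has no cycles. *)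

theory Defs
  imports "HOL-Analysis.Analysis"
begin

datatype quat = Quat (qRe: real) (qI: real) (qJ: real) (qK: real)

instantiation quat :: "{ab_group_add, one, times}"
begin
definition "0 = Quat 0 0 0 0"
definition "1 = Quat 1 0 0 0"
definition "p + q = Quat (qRe p + qRe q) (qI p + qI q) (qJ p + qJ q) (qK p + qK q)"
definition "- q = Quat (- qRe q) (- qI q) (- qJ q) (- qK q)"
definition "p - q = Quat (qRe p - qRe q) (qI p - qI q) (qJ p - qJ q) (qK p - qK q)"
text \<open>Hamilton product: i^2 = j^2 = k^2 = ijk = -1.\<close>
definition "p * q = Quat
   (qRe p * qRe q - qI p * qI q - qJ p * qJ q - qK p * qK q)
   (qRe p * qI q + qI p * qRe q + qJ p * qK q - qK p * qJ q)
   (qRe p * qJ q - qI p * qK q + qJ p * qRe q + qK p * qI q)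
   (qRe p * qK q + qI p * qJ q - qJ p * qI q + qK p * qRe q)"
instance
  by standard (auto simp: zero_quat_def plus_quat_def uminus_quat_def minus_quat_def
      intro: quat.expand)
end

definition qcnj :: "quat \<Rightarrow> quat" where
  "qcnj q = Quat (qRe q) (- qI q) (- qJ q) (- qK q)"

definition qreal :: "real \<Rightarrow> quat" where
  "qreal r = Quat r 0 0 0"

definition qnorm :: "quat \<Rightarrow> real" where
  "qnorm q = sqrt ((qRe q)\<^sup>2 + (qI q)\<^sup>2 + (qJ q)\<^sup>2 + (qK q)\<^sup>2)"

definition qdisk :: "quat \<Rightarrow> real \<Rightarrow> quat set" where
  "qdisk c r = {q. qnorm (q - c) \<le> r}"

definition num_range :: "nat \<Rightarrow> (nat \<Rightarrow> nat \<Rightarrow> quat) \<Rightarrow> quat set" where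
  "num_range n A = {(\<Sum>i<n. \<Sum>j<n. qcnj (x i) * A i j * x j) | x.
      (\<Sum>i<n. qcnj (x i) * x i) = 1}"

definition mat_adj :: "(nat \<Rightarrow> nat \<Rightarrow> quat) \<Rightarrow> nat \<Rightarrow> nat \<Rightarrow> bool" where
  "mat_adj N i j \<longleftrightarrow> N i j \<noteq> 0 \<or> N j i \<noteq> 0"

definition graph_connected :: "nat \<Rightarrow> (nat \<Rightarrow> nat \<Rightarrow> bool) \<Rightarrow> bool" where
  "graph_connected n E \<longleftrightarrow>
     (\<forall>i<n. \<forall>j<n. (\<lambda>u v. u < n \<and> v < n \<and> E u v)\<^sup>*\<^sup>* i j)"

definition graph_has_cycle :: "nat \<Rightarrow> (nat \<Rightarrow> nat \<Rightarrow> bool) \<Rightarrow> bool" where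
  "graph_has_cycle n E \<longleftrightarrow>
     (\<exists>i<n. E i i) \<or>
     (\<exists>vs. length vs \<ge> 3 \<and> distinct vs \<and> set vs \<subseteq> {..<n} \<and>
        (\<forall>k < length vs - 1. E (vs ! k) (vs ! Suc k)) \<and> E (last vs) (hd vs))"

definition mat_is_tree :: "nat \<Rightarrow> (nat \<Rightarrow> nat \<Rightarrow> quat) \<Rightarrow> bool" where
  "mat_is_tree n N \<longleftrightarrow> graph_connected n (mat_adj N) \<and> \<not> graph_has_cycle n (mat_adj N)"

definition rfun :: "nat \<Rightarrow> (nat \<Rightarrow> real) \<Rightarrow> (nat \<Rightarrow> nat \<Rightarrow> quat) \<Rightarrow> real \<Rightarrow> real" where
  "rfun n dg N d = Sup {(\<Sum>i<n. \<Sum>j\<in>{..<n}-{i}. \<beta> i * \<beta> j * qnorm (N i j)) | \<beta>.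
      (\<Sum>i<n. (\<beta> i)\<^sup>2) = 1 \<and> (\<forall>i<n. \<beta> i \<ge> 0) \<and> (\<Sum>i<n. dg i * (\<beta> i)\<^sup>2) = d}"

end

theory Submission
  imports Defs
begin


lemma quat_eq_iff: "p = q \<longleftrightarrow> qRe p = qRe q \<and> qI p = qI q \<and> qJ p = qJ q \<and> qK p = qK q"
  by (cases p; cases q) auto

lemma quat_comps [simp]:
  "qRe 0 = 0" "qI 0 = 0" "qJ 0 = 0" "qK 0 = 0"
  "qRe 1 = 1" "qI 1 = 0" "qJ 1 = 0" "qK 1 = 0"
  "qRe (p + q) = qRe p + qRe q" "qI (p + q) = qI p + qI q" "qJ (p + q) = qJ p + qJ q" "qK (p + q) = qK p + qK q"
  "qRe (p - q) = qRe p - qRe q" "qI (p - q) = qI p - qI q" "qJ (p - q) = qJ p - qJ q" "qK (p - q) = qK p - qK q"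
  "qRe (- q) = - qRe q" "qI (- q) = - qI q" "qJ (- q) = - qJ q" "qK (- q) = - qK q"
  "qRe (p * q) = qRe p * qRe q - qI p * qI q - qJ p * qJ q - qK p * qK q"
  "qI (p * q) = qRe p * qI q + qI p * qRe q + qJ p * qK q - qK p * qJ q"
  "qJ (p * q) = qRe p * qJ q - qI p * qK q + qJ p * qRe q + qK p * qI q"
  "qK (p * q) = qRe p * qK q + qI p * qJ q - qJ p * qI q + qK p * qRe q"
  "qRe (qcnj q) = qRe q" "qI (qcnj q) = - qI q" "qJ (qcnj q) = - qJ q" "qK (qcnj q) = - qK q"
  "qRe (qreal r) = r" "qI (qreal r) = 0" "qJ (qreal r) = 0" "qK (qreal r) = 0"
  by (simp_all add: zero_quat_def one_quat_def plus_quat_def minus_quat_def uminus_quat_def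
      times_quat_def qcnj_def qreal_def)

instance quat :: ring_1
  by standard (simp_all add: quat_eq_iff algebra_simps)

definition qsq :: "quat \<Rightarrow> real" where
  "qsq q = (qRe q)\<^sup>2 + (qI q)\<^sup>2 + (qJ q)\<^sup>2 + (qK q)\<^sup>2"

lemma qsq_nonneg: "qsq q \<ge> 0" unfolding qsq_def by (intro add_nonneg_nonneg zero_le_power2)

lemma qnorm_qsq: "qnorm q = sqrt (qsq q)" by (simp add: qnorm_def qsq_def)

lemma qnorm_sq: "(qnorm q)\<^sup>2 = qsq q" by (simp add: qnorm_qsq qsq_nonneg)

lemma qnorm_nonneg: "qnorm q \<ge> 0" by (simp add: qnorm_qsq qsq_nonneg)

lemma qsq_mult: "qsq (p * q) = qsq p * qsq q"
  by (simp add: qsq_def power2_eq_square algebra_simps)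

lemma qnorm_mult: "qnorm (p * q) = qnorm p * qnorm q"
  by (simp add: qnorm_qsq qsq_mult real_sqrt_mult)

lemma qsq_cnj: "qsq (qcnj q) = qsq q" by (simp add: qsq_def)
lemma qnorm_cnj: "qnorm (qcnj q) = qnorm q" by (simp add: qnorm_qsq qsq_cnj)

lemma qnorm_0 [simp]: "qnorm 0 = 0" by (simp add: qnorm_def)
lemma qnorm_eq_0: "qnorm q = 0 \<longleftrightarrow> q = 0"
  by (simp add: qnorm_qsq qsq_def quat_eq_iff add_nonneg_eq_0_iff)

lemma qcnj_mult: "qcnj (p * q) = qcnj q * qcnj p" by (simp add: quat_eq_iff)
lemma qcnj_qreal [simp]: "qcnj (qreal r) = qreal r" by (simp add: quat_eq_iff)
lemma qcnj_cnj: "qcnj (qcnj q) = q" by (simp add: quat_eq_iff)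
lemma qreal_comm: "qreal r * q = q * qreal r" by (simp add: quat_eq_iff)
lemma qreal_mult: "qreal a * qreal b = qreal (a * b)" by (simp add: quat_eq_iff)
lemma qreal_add: "qreal a + qreal b = qreal (a + b)" by (simp add: quat_eq_iff)
lemma qreal_0 [simp]: "qreal 0 = 0" by (simp add: quat_eq_iff)
lemma qreal_1 [simp]: "qreal 1 = 1" by (simp add: quat_eq_iff)
lemma qreal_inj: "qreal a = qreal b \<longleftrightarrow> a = b" by (simp add: quat_eq_iff)
lemma qreal_eq_1: "qreal a = 1 \<longleftrightarrow> a = 1" by (simp add: quat_eq_iff)
lemma qreal_sum: "qreal (\<Sum>i\<in>A. f i) = (\<Sum>i\<in>A. qreal (f i))"
  by (induction A rule: infinite_finite_induct) (simp_all add: qreal_add[symmetric])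

lemma cnj_mult_self: "qcnj q * q = qreal (qsq q)"
  by (simp add: quat_eq_iff qsq_def power2_eq_square algebra_simps)
lemma mult_cnj_self: "q * qcnj q = qreal (qsq q)"
  by (simp add: quat_eq_iff qsq_def power2_eq_square algebra_simps)

lemma qnorm_qreal: "qnorm (qreal r) = \<bar>r\<bar>" by (simp add: qnorm_def)

definition qv :: "quat \<Rightarrow> (real \<times> real) \<times> (real \<times> real)" where
  "qv q = ((qRe q, qI q), (qJ q, qK q))"

lemma qnorm_qv: "qnorm q = norm (qv q)"
  by (simp add: qnorm_def qv_def norm_Pair add.assoc)

lemma qv_add: "qv (p + q) = qv p + qv q" by (simp add: qv_def)

lemma qnorm_triangle: "qnorm (p + q) \<le> qnorm p + qnorm q"
  by (simp add: qnorm_qv qv_add norm_triangle_ineq)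

lemma qnorm_sum: "qnorm (\<Sum>i\<in>A. f i) \<le> (\<Sum>i\<in>A. qnorm (f i))"
proof (induction A rule: infinite_finite_induct)
  case (insert x F)
  then show ?case using qnorm_triangle[of "f x" "sum f F"] by simp
qed simp_all

lemma cnj_real_self: "qcnj q * qreal r * q = qreal (r * qsq q)"
proof -
  have "qcnj q * qreal r * q = qreal r * (qcnj q * q)" by (simp add: qreal_comm mult.assoc)
  thus ?thesis by (simp add: cnj_mult_self qreal_mult)
qed




definition acyc :: "nat set \<Rightarrow> (nat \<Rightarrow> nat \<Rightarrow> bool) \<Rightarrow> bool" where
  "acyc V E \<longleftrightarrow> (\<forall>i\<in>V. \<not> E i i) \<and>
     \<not>(\<exists>vs. length vs \<ge> 3 \<and> distinct vs \<and> set vs \<subseteq> V \<and>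
        (\<forall>k < length vs - 1. E (vs ! k) (vs ! Suc k)) \<and> E (last vs) (hd vs))"

lemma acyc_mono: "acyc V E \<Longrightarrow> W \<subseteq> V \<Longrightarrow> acyc W E"
  unfolding acyc_def by blast

lemma leaf_exists:
  assumes fin: "finite V" and ne: "V \<noteq> {}" and ac: "acyc V E"
  shows "\<exists>l\<in>V. \<forall>a\<in>V. \<forall>b\<in>V. E l a \<longrightarrow> E l b \<longrightarrow> a = b"
proof -
  define P where "P vs \<longleftrightarrow> vs \<noteq> [] \<and> distinct vs \<and> set vs \<subseteq> V \<and>
      (\<forall>k<length vs - 1. E (vs!k) (vs!Suc k))" for vs
  obtain v where v: "v \<in> V" using ne by blast
  have P1: "P [v]" using v by (simp add: P_def)
  have bnd: "P vs \<Longrightarrow> length vs < card V + 1" for vs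
    unfolding P_def using distinct_card[of vs] card_mono[OF fin, of "set vs"] by auto
  obtain vs where Pvs: "P vs" and mx: "\<And>ws. P ws \<Longrightarrow> length ws \<le> length vs"
    using ex_has_greatest_nat[of P "[v]" length "card V + 1"] P1 bnd by blast
  define l where "l = last vs"
  have lV: "l \<in> V" using Pvs unfolding P_def l_def by auto
  have noloop: "\<not> E l l" using ac lV unfolding acyc_def by auto
  have inset: "a \<in> set vs" if "a \<in> V" "E l a" for a
  proof (rule ccontr)
    assume na: "a \<notin> set vs"
    have ne: "vs \<noteq> []" using Pvs unfolding P_def by auto
    have "\<forall>k < length (vs@[a]) - 1. E ((vs@[a])!k) ((vs@[a])!Suc k)"
    proof (intro allI impI)
      fix k assume "k < length (vs@[a]) - 1"
      then consider "k < length vs - 1" | "k = length vs - 1" by force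
      then show "E ((vs@[a])!k) ((vs@[a])!Suc k)"
      proof cases
        case 1 then have "Suc k < length vs" by linarith
          then show ?thesis using 1 Pvs unfolding P_def by (simp add: nth_append)
      next
        case 2 then show ?thesis using ne that(2) unfolding l_def by (simp add: nth_append last_conv_nth)
      qed
    qed
    hence "P (vs @ [a])" using Pvs that na unfolding P_def by auto
    then show False using mx[of "vs @ [a]"] by simp
  qed
  have idx: "\<exists>k. k < length vs - 1 \<and> vs ! k = a" if aa: "a \<in> V" "E l a" for a
  proof -
    obtain k where k: "k < length vs" "vs ! k = a" using inset[OF aa] by (auto simp: in_set_conv_nth)
    have "a \<noteq> l" using noloop aa by auto
    hence "k \<noteq> length vs - 1" using k Pvs unfolding l_def P_def by (auto simp: last_conv_nth)
    hence "k < length vs - 1" using k by linarith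
    thus ?thesis using k by blast
  qed
  have nocyc: False if "k < length vs - 2" "E l (vs ! k)" for k
  proof -
    define ws where "ws = drop k vs"
    have len: "length ws \<ge> 3" using that unfolding ws_def by auto
    have "distinct ws" "set ws \<subseteq> V" using Pvs unfolding ws_def P_def by (auto dest: in_set_dropD)
    moreover have "\<forall>m < length ws - 1. E (ws ! m) (ws ! Suc m)"
      using Pvs unfolding ws_def P_def by auto
    moreover have "last ws = l" "hd ws = vs ! k" using that unfolding ws_def l_def
      by (auto simp: hd_drop_conv_nth)
    ultimately have "\<exists>vs. length vs \<ge> 3 \<and> distinct vs \<and> set vs \<subseteq> V \<and>
        (\<forall>k < length vs - 1. E (vs ! k) (vs ! Suc k)) \<and> E (last vs) (hd vs)"
      using len that(2) by (intro exI[of _ ws]) simp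
    thus False using ac unfolding acyc_def by blast
  qed
  have "\<forall>a\<in>V. \<forall>b\<in>V. E l a \<longrightarrow> E l b \<longrightarrow> a = b"
  proof (intro ballI impI)
    fix a b assume ab: "a \<in> V" "b \<in> V" "E l a" "E l b"
    obtain ka where ka: "ka < length vs - 1" "vs ! ka = a" using idx ab by blast
    obtain kb where kb: "kb < length vs - 1" "vs ! kb = b" using idx ab by blast
    show "a = b"
    proof (rule ccontr)
      assume "a \<noteq> b"
      hence "ka \<noteq> kb" using ka kb by auto
      hence "ka < length vs - 2 \<or> kb < length vs - 2" using ka kb by linarith
      thus False
      proof
        assume "ka < length vs - 2" thus False using nocyc[of ka] ka ab by simp
      next
        assume "kb < length vs - 2" thus False using nocyc[of kb] kb ab by simp
      qed
    qed
  qed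
  thus ?thesis using lV by blast
qed

lemma tree_potential:
  assumes "finite V" "acyc V E" and sym: "\<And>i j. E i j \<Longrightarrow> E j i" and Pc: "P c"
    and ext: "\<And>i j a. i\<in>V \<Longrightarrow> j\<in>V \<Longrightarrow> E i j \<Longrightarrow> P a \<Longrightarrow> \<exists>b. P b \<and> C i j a b"
    and Csym: "\<And>i j a b. C i j a b \<Longrightarrow> C j i b a"
  shows "\<exists>u. (\<forall>i\<in>V. P (u i)) \<and> (\<forall>i\<in>V. \<forall>j\<in>V. E i j \<longrightarrow> C i j (u i) (u j))"
  using assms(1,2) ext
proof (induction "card V" arbitrary: V rule: less_induct)
  case less
  show ?case
  proof (cases "V = {}")
    case True then show ?thesis by auto
  next
    case False
    obtain l where lV: "l \<in> V" and leaf: "\<forall>a\<in>V. \<forall>b\<in>V. E l a \<longrightarrow> E l b \<longrightarrow> a = b"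
      using leaf_exists[OF less.prems(1) False less.prems(2)] by blast
    have noloop: "\<not> E l l" using less.prems(2) lV unfolding acyc_def by auto
    define V' where "V' = V - {l}"
    have "card V' < card V" using lV less.prems(1) unfolding V'_def by (metis card_Diff1_less)
    moreover have "finite V'" "acyc V' E" using less.prems acyc_mono unfolding V'_def by auto
    moreover have "\<And>i j a. i\<in>V' \<Longrightarrow> j\<in>V' \<Longrightarrow> E i j \<Longrightarrow> P a \<Longrightarrow> \<exists>b. P b \<and> C i j a b"
      using less.prems(3) unfolding V'_def by blast
    ultimately obtain u where u: "\<forall>i\<in>V'. P (u i)" "\<forall>i\<in>V'. \<forall>j\<in>V'. E i j \<longrightarrow> C i j (u i) (u j)"
      using less.hyps by blast
    show ?thesis
    proof (cases "\<exists>m\<in>V'. E l m")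
      case True
      then obtain m where m: "m \<in> V'" "E l m" by blast
      have mV: "m \<in> V" "m \<noteq> l" using m unfolding V'_def by auto
      obtain b where b: "P b" "C m l (u m) b" using less.prems(3)[OF mV(1) lV sym[OF m(2)]] u(1) m(1) by blast
      have nb: "j = m" if "j \<in> V" "E l j" for j using leaf m(2) mV(1) that by blast
      show ?thesis
      proof (rule exI[of _ "u(l := b)"], intro conjI ballI impI)
        fix i assume "i \<in> V" thus "P ((u(l := b)) i)" using u(1) b(1) unfolding V'_def by auto
      next
        fix i j assume ij: "i \<in> V" "j \<in> V" "E i j"
        show "C i j ((u(l := b)) i) ((u(l := b)) j)"
        proof (cases "i = l")
          case True
          hence "j \<noteq> l" using noloop ij by auto
          moreover have "j = m" using nb ij True by auto
          ultimately show ?thesis using True Csym[OF b(2)] mV(2) by simp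
        next
          case False
          show ?thesis
          proof (cases "j = l")
            case True
            have "i = m" using nb[of i] ij True sym[of i j] by simp
            thus ?thesis using True False b(2) by simp
          next
            case False2: False
            thus ?thesis using False u(2) ij unfolding V'_def by auto
          qed
        qed
      qed
    next
      case False
      show ?thesis
      proof (rule exI[of _ "u(l := c)"], intro conjI ballI impI)
        fix i assume "i \<in> V" thus "P ((u(l := c)) i)" using u(1) Pc unfolding V'_def by auto
      next
        fix i j assume ij: "i \<in> V" "j \<in> V" "E i j"
        have "i \<noteq> l"
        proof
          assume "i = l" thus False using ij False noloop unfolding V'_def by auto
        qed
        moreover have "j \<noteq> l"
        proof
          assume jl: "j = l"
          hence "E l i" using sym[OF ij(3)] by simp
          moreover have "i \<noteq> l" using jl ij noloop by auto
          ultimately show False using ij False unfolding V'_def by auto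
        qed
        ultimately show "C i j ((u(l := c)) i) ((u(l := c)) j)" using u(2) ij unfolding V'_def by auto
      qed
    qed
  qed
qed



definition rho :: "nat \<Rightarrow> (nat \<Rightarrow> nat \<Rightarrow> quat) \<Rightarrow> (nat \<Rightarrow> real) \<Rightarrow> real" where
  "rho n N \<beta> = (\<Sum>i<n. \<Sum>j\<in>{..<n}-{i}. \<beta> i * \<beta> j * qnorm (N i j))"

definition dsum :: "nat \<Rightarrow> (nat \<Rightarrow> real) \<Rightarrow> (nat \<Rightarrow> real) \<Rightarrow> real" where
  "dsum n dg \<beta> = (\<Sum>i<n. dg i * (\<beta> i)\<^sup>2)"

lemma rho_full:
  assumes "\<forall>i<n. N i i = 0"
  shows "(\<Sum>i<n. \<Sum>j<n. \<beta> i * \<beta> j * qnorm (N i j)) = rho n N \<beta>"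
  unfolding rho_def
proof (rule sum.cong[OF refl])
  fix i assume i: "i \<in> {..<n}"
  show "(\<Sum>j<n. \<beta> i * \<beta> j * qnorm (N i j)) = (\<Sum>j\<in>{..<n}-{i}. \<beta> i * \<beta> j * qnorm (N i j))"
    using sum.remove[OF finite_lessThan i, of "\<lambda>j. \<beta> i * \<beta> j * qnorm (N i j)"] assms i by simp
qed

lemma expand_form:
  fixes n :: nat
  shows "(\<Sum>i<n. \<Sum>j<n. qcnj (x i) * ((if i = j then qreal (dg i) else 0) + N i j) * x j)
   = qreal (\<Sum>i<n. dg i * qsq (x i)) + (\<Sum>i<n. \<Sum>j<n. qcnj (x i) * N i j * x j)"
proof -
  have "(\<Sum>i<n. \<Sum>j<n. qcnj (x i) * ((if i = j then qreal (dg i) else 0) + N i j) * x j)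
     = (\<Sum>i<n. \<Sum>j<n. qcnj (x i) * (if i = j then qreal (dg i) else 0) * x j)
       + (\<Sum>i<n. \<Sum>j<n. qcnj (x i) * N i j * x j)"
    by (simp add: distrib_left distrib_right sum.distrib)
  moreover have "(\<Sum>j<n. qcnj (x i) * (if i = j then qreal (dg i) else 0) * x j)
      = (if i < n then qreal (dg i * qsq (x i)) else 0)" for i
  proof -
    have "(\<Sum>j<n. qcnj (x i) * (if i = j then qreal (dg i) else 0) * x j)
        = (\<Sum>j<n. if i = j then qcnj (x i) * qreal (dg i) * x i else 0)"
      by (rule sum.cong) auto
    thus ?thesis by (simp add: cnj_real_self sum.delta sum.delta')
  qed
  ultimately show ?thesis by (simp add: qreal_sum)
qed

lemma scal3: "qcnj (qreal a * u) * M * (qreal b * v) = qreal (a * b) * (qcnj u * M * v)"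
  by (simp add: quat_eq_iff algebra_simps)

lemma unit_cnj: "qnorm a = 1 \<Longrightarrow> qcnj a * a = 1 \<and> a * qcnj a = 1"
  using qnorm_sq[of a] by (simp add: cnj_mult_self mult_cnj_self)

lemma qreal_left_comm: "q * (qreal r * p) = qreal r * (q * p)"
proof -
  have "q * (qreal r * p) = (q * qreal r) * p" by (rule mult.assoc[symmetric])
  also have "\<dots> = (qreal r * q) * p" by (simp only: qreal_comm)
  also have "\<dots> = qreal r * (q * p)" by (rule mult.assoc)
  finally show ?thesis .
qed

lemma align1:
  assumes v: "qnorm v = 1" and a: "qnorm a = 1"
  shows "qcnj a * (qreal r * v) * (qcnj v * a * \<omega>) = qreal r * \<omega>"
proof -
  have "qcnj a * (qreal r * v) * (qcnj v * a * \<omega>) = qreal r * (qcnj a * (v * qcnj v) * a * \<omega>)"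
    by (simp add: mult.assoc qreal_left_comm)
  also have "\<dots> = qreal r * \<omega>" using unit_cnj[OF v] unit_cnj[OF a] by (simp add: mult.assoc)
  finally show ?thesis .
qed

lemma align2:
  assumes v: "qnorm v = 1" and a: "qnorm a = 1"
  shows "qcnj (v * a * qcnj \<omega>) * (qreal r * v) * a = qreal r * \<omega>"
proof -
  have "qcnj (v * a * qcnj \<omega>) * (qreal r * v) * a = (\<omega> * qcnj a * qcnj v) * (qreal r * v) * a"
    by (simp add: qcnj_mult qcnj_cnj mult.assoc)
  also have "\<dots> = qreal r * (\<omega> * (qcnj a * ((qcnj v * v) * a)))"
    by (simp add: mult.assoc qreal_left_comm)
  also have "\<dots> = qreal r * \<omega>" using unit_cnj[OF v] unit_cnj[OF a] by (simp add: mult.assoc)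
  finally show ?thesis .
qed

lemma polar:
  assumes "q \<noteq> 0"
  shows "q = qreal (qnorm q) * (qreal (1 / qnorm q) * q) \<and> qnorm (qreal (1 / qnorm q) * q) = 1"
proof -
  have "qnorm q \<noteq> 0" using assms qnorm_eq_0 by simp
  hence pos: "qnorm q > 0" using qnorm_nonneg[of q] by linarith
  have "qreal (qnorm q) * (qreal (1 / qnorm q) * q) = (qreal (qnorm q) * qreal (1 / qnorm q)) * q"
    by (rule mult.assoc[symmetric])
  also have "\<dots> = qreal (qnorm q * (1 / qnorm q)) * q" by (simp only: qreal_mult)
  also have "\<dots> = q" using pos by simp
  finally have e: "qreal (qnorm q) * (qreal (1 / qnorm q) * q) = q" .
  have "qnorm (qreal (1 / qnorm q) * q) = \<bar>1 / qnorm q\<bar> * qnorm q" by (simp only: qnorm_mult qnorm_qreal)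
  also have "\<dots> = 1" using pos by simp
  finally have n: "qnorm (qreal (1 / qnorm q) * q) = 1" .
  show ?thesis by (intro conjI) (simp_all only: e n)
qed

lemma realize:
  assumes ut: "\<forall>i<n. \<forall>j<n. j \<le> i \<longrightarrow> N i j = 0"
    and ac: "acyc {..<n} (mat_adj N)"
    and b1: "(\<Sum>i<n. (\<beta> i)\<^sup>2) = 1"
    and wn: "qnorm w = rho n N \<beta>"
  shows "qreal (dsum n dg \<beta>) + w \<in> num_range n (\<lambda>i j. (if i = j then qreal (dg i) else 0) + N i j)"
proof -
  define \<omega> where "\<omega> = (if w = 0 then 1 else qreal (1 / qnorm w) * w)"
  have \<omega>1: "qnorm \<omega> = 1"
  proof (cases "w = 0")
    case True then show ?thesis unfolding \<omega>_def by (simp add: qnorm_def)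
  next
    case False then show ?thesis unfolding \<omega>_def using conjunct2[OF polar[OF False]] by simp
  qed
  have w\<omega>: "qreal (rho n N \<beta>) * \<omega> = w"
  proof (cases "w = 0")
    case True then show ?thesis using wn by simp
  next
    case False
    have "qreal (rho n N \<beta>) * \<omega> = qreal (qnorm w) * (qreal (1 / qnorm w) * w)"
      using False wn unfolding \<omega>_def by simp
    also have "\<dots> = w" using conjunct1[OF polar[OF False]] by metis
    finally show ?thesis .
  qed
  define C where "C i j a b \<longleftrightarrow>
     (N i j \<noteq> 0 \<longrightarrow> qcnj a * N i j * b = qreal (qnorm (N i j)) * \<omega>) \<and>
     (N j i \<noteq> 0 \<longrightarrow> qcnj b * N j i * a = qreal (qnorm (N j i)) * \<omega>)" for i j a b
  have ext: "\<exists>b. qnorm b = 1 \<and> C i j a b"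
    if ij: "i \<in> {..<n}" "j \<in> {..<n}" "mat_adj N i j" and a: "qnorm a = 1" for i j a
  proof (cases "N i j \<noteq> 0")
    case True
    hence Nji: "N j i = 0" using ut ij by (metis lessThan_iff nat_le_linear)
    define v where "v = qreal (1 / qnorm (N i j)) * N i j"
    have v: "N i j = qreal (qnorm (N i j)) * v" "qnorm v = 1" using polar[OF True] unfolding v_def by blast+
    define b where "b = qcnj v * a * \<omega>"
    have "qcnj a * N i j * b = qreal (qnorm (N i j)) * \<omega>"
      using align1[OF v(2) a, of "qnorm (N i j)" \<omega>] v(1) unfolding b_def by metis
    hence "C i j a b" unfolding C_def using Nji by simp
    moreover have "qnorm b = 1" unfolding b_def using v(2) a \<omega>1 by (simp add: qnorm_mult qnorm_cnj)
    ultimately show ?thesis by blast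
  next
    case False
    hence Nji: "N j i \<noteq> 0" using ij(3) unfolding mat_adj_def by simp
    define v where "v = qreal (1 / qnorm (N j i)) * N j i"
    have v: "N j i = qreal (qnorm (N j i)) * v" "qnorm v = 1" using polar[OF Nji] unfolding v_def by blast+
    define b where "b = v * a * qcnj \<omega>"
    have "qcnj b * N j i * a = qreal (qnorm (N j i)) * \<omega>"
      using align2[OF v(2) a, of \<omega> "qnorm (N j i)"] v(1) unfolding b_def by metis
    hence "C i j a b" unfolding C_def using False by simp
    moreover have "qnorm b = 1" unfolding b_def using v(2) a \<omega>1 by (simp add: qnorm_mult qnorm_cnj)
    ultimately show ?thesis by blast
  qed
  have Csym: "C i j a b \<Longrightarrow> C j i b a" for i j a b unfolding C_def by blast
  have msym: "mat_adj N i j \<Longrightarrow> mat_adj N j i" for i j unfolding mat_adj_def by blast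
  obtain u where u1: "\<forall>i\<in>{..<n}. qnorm (u i) = 1"
    and uC: "\<forall>i\<in>{..<n}. \<forall>j\<in>{..<n}. mat_adj N i j \<longrightarrow> C i j (u i) (u j)"
    using tree_potential[of "{..<n}" "mat_adj N" "\<lambda>q. qnorm q = 1" 1 C, OF finite_lessThan ac msym _ ext Csym]
    by (auto simp: qnorm_def)
  define x where "x i = qreal (\<beta> i) * u i" for i
  have cx: "qcnj (x i) = qcnj (u i) * qreal (\<beta> i)" for i unfolding x_def by (simp add: qcnj_mult)
  have sq: "qsq (x i) = (\<beta> i)\<^sup>2" if "i < n" for i
    using u1 that qnorm_sq[of "u i"] unfolding x_def by (simp add: qsq_mult qsq_def[of "qreal _"])
  have nrm: "(\<Sum>i<n. qcnj (x i) * x i) = 1"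
  proof -
    have "(\<Sum>i<n. qcnj (x i) * x i) = (\<Sum>i<n. qreal ((\<beta> i)\<^sup>2))"
      by (rule sum.cong) (simp_all add: cnj_mult_self sq)
    thus ?thesis using b1 by (simp add: qreal_sum[symmetric])
  qed
  have trm: "qcnj (x i) * N i j * x j = qreal (\<beta> i * \<beta> j * qnorm (N i j)) * \<omega>"
    if ij: "i < n" "j < n" for i j
  proof (cases "N i j = 0")
    case True then show ?thesis by simp
  next
    case False
    hence "C i j (u i) (u j)" using uC ij unfolding mat_adj_def by auto
    hence e: "qcnj (u i) * N i j * u j = qreal (qnorm (N i j)) * \<omega>" using False unfolding C_def by simp
    have "qcnj (x i) * N i j * x j = qreal (\<beta> i * \<beta> j) * (qcnj (u i) * N i j * u j)"
      unfolding x_def by (rule scal3)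
    also have "\<dots> = qreal (\<beta> i * \<beta> j * qnorm (N i j)) * \<omega>"
      by (simp add: e mult.assoc[symmetric] qreal_mult)
    finally show ?thesis .
  qed
  have Nii: "\<forall>i<n. N i i = 0" using ut by auto
  have "(\<Sum>i<n. \<Sum>j<n. qcnj (x i) * N i j * x j)
      = (\<Sum>i<n. \<Sum>j<n. qreal (\<beta> i * \<beta> j * qnorm (N i j)) * \<omega>)"
    by (rule sum.cong[OF refl], rule sum.cong[OF refl]) (simp add: trm)
  also have "\<dots> = qreal (\<Sum>i<n. \<Sum>j<n. \<beta> i * \<beta> j * qnorm (N i j)) * \<omega>"
    by (simp add: qreal_sum sum_distrib_right)
  also have "\<dots> = w" using rho_full[of n N \<beta>] Nii w\<omega> by simp
  finally have NN: "(\<Sum>i<n. \<Sum>j<n. qcnj (x i) * N i j * x j) = w" .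
  have "(\<Sum>i<n. dg i * qsq (x i)) = dsum n dg \<beta>" unfolding dsum_def by (rule sum.cong) (simp_all add: sq)
  hence "(\<Sum>i<n. \<Sum>j<n. qcnj (x i) * ((if i = j then qreal (dg i) else 0) + N i j) * x j)
      = qreal (dsum n dg \<beta>) + w" using expand_form[where n=n and x=x and dg=dg and N=N] NN by simp
  thus ?thesis unfolding num_range_def using nrm by (intro CollectI exI[of _ x]) auto
qed




lemma cont_coord [continuous_intros]: "continuous_on S (\<lambda>x::'a \<Rightarrow> real. x i)"
  by (rule continuous_on_subset[OF continuous_on_product_coordinates]) simp

definition Sset :: "nat \<Rightarrow> (nat \<Rightarrow> real) \<Rightarrow> (nat \<Rightarrow> nat \<Rightarrow> quat) \<Rightarrow> real \<Rightarrow> real set" where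
  "Sset n dg N d = {rho n N \<beta> | \<beta>. (\<Sum>i<n. (\<beta> i)\<^sup>2) = 1 \<and> (\<forall>i<n. \<beta> i \<ge> 0) \<and> dsum n dg \<beta> = d}"

lemma rfun_Sset: "rfun n dg N d = Sup (Sset n dg N d)"
  unfolding rfun_def Sset_def rho_def dsum_def by simp

lemma beta_le1: fixes \<beta> :: "nat \<Rightarrow> real" assumes "(\<Sum>i<n. (\<beta> i)\<^sup>2) = 1" "\<forall>i<n. \<beta> i \<ge> 0" "i < n" shows "\<beta> i \<le> 1"
proof -
  have "(\<beta> i)\<^sup>2 \<le> (\<Sum>i<n. (\<beta> i)\<^sup>2)"
    using member_le_sum[of i "{..<n}" "\<lambda>i. (\<beta> i)\<^sup>2"] assms(3) by simp
  hence "(\<beta> i)\<^sup>2 \<le> 1\<^sup>2" using assms(1) by simp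
  thus ?thesis by (rule power2_le_imp_le) simp
qed

lemma Sset_bdd: "bdd_above (Sset n dg N d)"
proof -
  define M where "M = (\<Sum>i<n. \<Sum>j\<in>{..<n}-{i}. qnorm (N i j))"
  have "y \<le> M" if y: "y \<in> Sset n dg N d" for y
  proof -
    obtain \<beta> where b: "y = rho n N \<beta>" "(\<Sum>i<n. (\<beta> i)\<^sup>2) = 1" "\<forall>i<n. \<beta> i \<ge> 0"
      using y unfolding Sset_def by blast
    have "\<beta> i * \<beta> j * qnorm (N i j) \<le> qnorm (N i j)" if "i < n" "j < n" for i j
    proof -
      have "\<beta> i * \<beta> j \<le> 1" by (rule mult_le_one) (use beta_le1[OF b(2,3)] b(3) that in auto)
      from mult_right_mono[OF this qnorm_nonneg[of "N i j"]] show ?thesis by simp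
    qed
    thus ?thesis unfolding b(1) rho_def M_def by (intro sum_mono) auto
  qed
  thus ?thesis by (rule bdd_aboveI)
qed

lemma rfun_upper:
  assumes "(\<Sum>i<n. (\<beta> i)\<^sup>2) = 1" "\<forall>i<n. \<beta> i \<ge> 0"
  shows "rho n N \<beta> \<le> rfun n dg N (dsum n dg \<beta>)"
  unfolding rfun_Sset by (rule cSup_upper[OF _ Sset_bdd]) (unfold Sset_def, use assms in blast)

lemma rho_trunc: "rho n N (\<lambda>i. if i < n then \<beta> i else 0) = rho n N \<beta>"
  unfolding rho_def by (intro sum.cong) auto
lemma dsum_trunc: "dsum n dg (\<lambda>i. if i < n then \<beta> i else 0) = dsum n dg \<beta>"
  unfolding dsum_def by (intro sum.cong) auto

lemma attain:
  assumes "Sset n dg N d \<noteq> {}"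
  shows "\<exists>\<beta>. (\<Sum>i<n. (\<beta> i)\<^sup>2) = 1 \<and> (\<forall>i<n. \<beta> i \<ge> 0) \<and> dsum n dg \<beta> = d \<and> rho n N \<beta> = rfun n dg N d"
proof -
  define B where "B i = (if i < n then {0..1::real} else {0})" for i
  define K where "K = Pi UNIV B \<inter> {\<beta>. (\<Sum>i<n. (\<beta> i)\<^sup>2) = 1} \<inter> {\<beta>. dsum n dg \<beta> = d}"
  have cPi: "compact (Pi UNIV B)"
    using compactin_PiE[of "\<lambda>i. euclidean" UNIV B] unfolding B_def
    by (simp add: euclidean_product_topology PiE_UNIV_domain)
  have c1: "closed {\<beta>::nat\<Rightarrow>real. (\<Sum>i<n. (\<beta> i)\<^sup>2) = 1}"
    by (rule closed_Collect_eq) (intro continuous_intros)+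
  have c2: "closed {\<beta>::nat\<Rightarrow>real. dsum n dg \<beta> = d}"
    unfolding dsum_def by (rule closed_Collect_eq) (intro continuous_intros)+
  have cK: "compact K" unfolding K_def using cPi c1 c2 by (intro compact_Int_closed closed_Int)
  have KS: "rho n N ` K = Sset n dg N d"
  proof
    show "rho n N ` K \<subseteq> Sset n dg N d"
      unfolding K_def Sset_def B_def by (force split: if_splits)
    show "Sset n dg N d \<subseteq> rho n N ` K"
    proof
      fix y assume "y \<in> Sset n dg N d"
      then obtain \<beta> where b: "y = rho n N \<beta>" "(\<Sum>i<n. (\<beta> i)\<^sup>2) = 1" "\<forall>i<n. \<beta> i \<ge> 0" "dsum n dg \<beta> = d"
        unfolding Sset_def by blast
      define \<gamma> where "\<gamma> i = (if i < n then \<beta> i else 0)" for i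
      have "\<gamma> \<in> K" unfolding K_def B_def \<gamma>_def
        using b beta_le1[OF b(2,3)] dsum_trunc[of n dg \<beta>] by (auto simp: \<gamma>_def)
      moreover have "y = rho n N \<gamma>" using b rho_trunc unfolding \<gamma>_def by metis
      ultimately show "y \<in> rho n N ` K" by blast
    qed
  qed
  have Kne: "K \<noteq> {}" using KS assms by auto
  have cont: "continuous_on K (rho n N)" unfolding rho_def by (intro continuous_intros)
  obtain \<beta> where bK: "\<beta> \<in> K" and mx: "\<forall>y\<in>K. rho n N y \<le> rho n N \<beta>"
    using continuous_attains_sup[OF cK Kne cont] by blast
  have "rfun n dg N d = rho n N \<beta>"
    unfolding rfun_Sset KS[symmetric] by (rule cSup_eq_maximum) (use bK mx in auto)
  moreover have "\<forall>i<n. \<beta> i \<ge> 0"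
  proof (intro allI impI)
    fix i assume i: "i < n"
    have "\<beta> i \<in> B i" using bK unfolding K_def by auto
    thus "\<beta> i \<ge> 0" using i unfolding B_def by simp
  qed
  moreover have "(\<Sum>i<n. (\<beta> i)\<^sup>2) = 1 \<and> dsum n dg \<beta> = d"
    using bK unfolding K_def by auto
  ultimately show ?thesis by auto
qed




lemma Sset_ne:
  assumes n: "n \<ge> 1" and d: "d \<in> {Min (dg ` {..<n}) .. Max (dg ` {..<n})}"
  shows "Sset n dg N d \<noteq> {}"
proof -
  have "0 \<in> {..<n}" using n by simp
  hence ne: "dg ` {..<n} \<noteq> {}" by blast
  obtain a where a: "a < n" "dg a = Min (dg ` {..<n})" using Min_in[OF finite_imageI[OF finite_lessThan] ne] by auto
  obtain b where b: "b < n" "dg b = Max (dg ` {..<n})" using Max_in[OF finite_imageI[OF finite_lessThan] ne] by auto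
  have dab: "dg a \<le> d" "d \<le> dg b" using d a b by auto
  show ?thesis
  proof (cases "dg a = dg b")
    case True
    define \<beta> where "\<beta> i = (if i = a then 1 else (0::real))" for i
    have sq1: "(\<beta> i)\<^sup>2 = (if i = a then 1 else 0)" for i unfolding \<beta>_def by simp
    have sq2: "dg i * (\<beta> i)\<^sup>2 = (if i = a then dg a else 0)" for i unfolding \<beta>_def by simp
    have "(\<Sum>i<n. (\<beta> i)\<^sup>2) = 1" unfolding sq1 using a by simp
    moreover have "dsum n dg \<beta> = d" unfolding dsum_def sq2 using a dab True by simp
    ultimately have "(\<Sum>i<n. (\<beta> i)\<^sup>2) = 1" "dsum n dg \<beta> = d" by auto
    moreover have "\<forall>i<n. \<beta> i \<ge> 0" unfolding \<beta>_def by auto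
    ultimately have "rho n N \<beta> \<in> Sset n dg N d" unfolding Sset_def by blast
    thus ?thesis by blast
  next
    case False
    hence ab: "a \<noteq> b" by auto
    have lt: "dg a < dg b" using dab False by auto
    define t where "t = (dg b - d) / (dg b - dg a)"
    have t: "0 \<le> t" "t \<le> 1" unfolding t_def using dab lt by (auto simp: divide_simps)
    have t2: "t * (dg b - dg a) = dg b - d" unfolding t_def using lt by simp
    have "t * dg a + (1 - t) * dg b = dg b - t * (dg b - dg a)" by (simp add: algebra_simps)
    hence td: "t * dg a + (1 - t) * dg b = d" using t2 by simp
    define \<beta> where "\<beta> i = (if i = a then sqrt t else if i = b then sqrt (1 - t) else 0)" for i
    have sq: "(\<beta> i)\<^sup>2 = (if i = a then t else 0) + (if i = b then 1 - t else 0)" for i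
      unfolding \<beta>_def using ab t by auto
    have s1: "(\<Sum>i<n. (\<beta> i)\<^sup>2) = 1" unfolding sq using a b by (simp add: sum.distrib)
    have sq2: "dg i * (\<beta> i)\<^sup>2 = (if i = a then t * dg a else 0) + (if i = b then (1 - t) * dg b else 0)" for i
      unfolding \<beta>_def using ab t by auto
    have s2: "dsum n dg \<beta> = d" unfolding dsum_def sq2 using a b td by (simp add: sum.distrib)
    have s3: "\<forall>i<n. \<beta> i \<ge> 0" unfolding \<beta>_def using t by auto
    have "rho n N \<beta> \<in> Sset n dg N d" unfolding Sset_def using s1 s2 s3 by blast
    thus ?thesis by blast
  qed
qed

lemma ivt_step:
  fixes \<beta> :: "nat \<Rightarrow> real"
  assumes n: "n \<ge> 1" and b1: "(\<Sum>i<n. (\<beta> i)\<^sup>2) = 1" and b0: "\<forall>i<n. \<beta> i \<ge> 0"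
    and pn: "qnorm (p - qreal (dsum n dg \<beta>)) \<le> rho n N \<beta>"
  shows "\<exists>\<beta>'. (\<Sum>i<n. (\<beta>' i)\<^sup>2) = 1 \<and> qnorm (p - qreal (dsum n dg \<beta>')) = rho n N \<beta>'"
proof -
  define e where "e i = (if i = 0 then 1 else (0::real))" for i :: nat
  define \<gamma> where "\<gamma> t i = (1 - t) * \<beta> i + t * e i" for t i
  define S where "S t = (\<Sum>i<n. (\<gamma> t i)\<^sup>2)" for t
  define D where "D t = dsum n dg (\<gamma> t)" for t
  define R where "R t = rho n N (\<gamma> t)" for t
  define G where "G t = (qRe p - D t / S t)\<^sup>2 + (qI p)\<^sup>2 + (qJ p)\<^sup>2 + (qK p)\<^sup>2 - (R t / S t)\<^sup>2" for t
  have qG: "G t = qsq (p - qreal (D t / S t)) - (R t / S t)\<^sup>2" for t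
    unfolding G_def qsq_def by simp
  have g0: "\<gamma> t i \<ge> 0" if "0 \<le> t" "t \<le> 1" "i < n" for t i
    unfolding \<gamma>_def e_def using that b0 by auto
  have Spos: "S t > 0" if t: "0 \<le> t" "t \<le> 1" for t
  proof (cases "t = 0")
    case True
    then show ?thesis unfolding S_def \<gamma>_def using b1 by simp
  next
    case False
    have "(\<gamma> t 0)\<^sup>2 \<le> S t" unfolding S_def
      using member_le_sum[of 0 "{..<n}" "\<lambda>i. (\<gamma> t i)\<^sup>2"] n by simp
    moreover have "\<gamma> t 0 \<ge> t" unfolding \<gamma>_def e_def using b0 n t by simp
    moreover have "t\<^sup>2 \<le> (\<gamma> t 0)\<^sup>2" using power_mono[OF \<open>\<gamma> t 0 \<ge> t\<close> t(1), of 2] by simp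
    moreover have "t\<^sup>2 > 0" using False by simp
    ultimately show ?thesis by linarith
  qed
  have g0v: "G 0 \<le> 0"
  proof -
    have "S 0 = 1" "D 0 = dsum n dg \<beta>" "R 0 = rho n N \<beta>" unfolding S_def D_def R_def \<gamma>_def using b1 by simp_all
    moreover have "qsq (p - qreal (dsum n dg \<beta>)) \<le> (rho n N \<beta>)\<^sup>2"
      using power_mono[OF pn qnorm_nonneg, of 2] qnorm_sq by simp
    ultimately show ?thesis unfolding qG by simp
  qed
  have g1v: "0 \<le> G 1"
  proof -
    have "\<gamma> 1 = e" unfolding \<gamma>_def by auto
    hence "R 1 = 0" unfolding R_def rho_def e_def by (intro sum.neutral) auto
    thus ?thesis unfolding qG using qsq_nonneg by simp
  qed
  have cg: "continuous_on {0..1} (\<lambda>t. \<gamma> t i)" for i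
    unfolding \<gamma>_def by (intro continuous_on_add continuous_on_mult continuous_on_diff continuous_on_const continuous_on_id)
  have cS: "continuous_on {0..1} S" unfolding S_def
    by (intro continuous_on_sum continuous_on_power cg)
  have cD: "continuous_on {0..1} D" unfolding D_def dsum_def
    by (intro continuous_on_sum continuous_on_mult continuous_on_power continuous_on_const cg)
  have cR: "continuous_on {0..1} R" unfolding R_def rho_def
    by (intro continuous_on_sum continuous_on_mult continuous_on_const cg)
  have Snz: "\<forall>t\<in>{0..1}. S t \<noteq> 0" using Spos by force
  have cDS: "continuous_on {0..1} (\<lambda>t. D t / S t)" by (rule continuous_on_divide[OF cD cS Snz])
  have cRS: "continuous_on {0..1} (\<lambda>t. R t / S t)" by (rule continuous_on_divide[OF cR cS Snz])
  have cont: "continuous_on {0..1} G" unfolding G_def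
    by (intro continuous_on_add continuous_on_diff continuous_on_power continuous_on_const cDS cRS)
  obtain t where t: "0 \<le> t" "t \<le> 1" "G t = 0" using IVT'[of G 0 0 1, OF g0v g1v _ cont] by auto
  define \<beta>' where "\<beta>' i = \<gamma> t i / sqrt (S t)" for i
  have St: "S t > 0" using Spos t by auto
  have sq: "(\<beta>' i)\<^sup>2 = (\<gamma> t i)\<^sup>2 / S t" for i unfolding \<beta>'_def using St by (simp add: power_divide)
  have "(\<Sum>i<n. (\<beta>' i)\<^sup>2) = 1" unfolding sq using St by (simp add: sum_divide_distrib[symmetric] S_def)
  moreover have "dsum n dg \<beta>' = D t / S t"
    unfolding D_def dsum_def sq by (simp add: sum_divide_distrib times_divide_eq_right)
  moreover have "rho n N \<beta>' = R t / S t"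
  proof -
    have "\<beta>' i * \<beta>' j = \<gamma> t i * \<gamma> t j / S t" for i j
      unfolding \<beta>'_def using St by (simp add: real_sqrt_mult[symmetric])
    hence "rho n N \<beta>' = (\<Sum>i<n. \<Sum>j\<in>{..<n}-{i}. \<gamma> t i * \<gamma> t j * qnorm (N i j) / S t)"
      unfolding rho_def by simp
    thus ?thesis unfolding R_def rho_def by (simp add: sum_divide_distrib)
  qed
  moreover have RS0: "R t / S t \<ge> 0" unfolding R_def rho_def using St g0[OF t(1,2)]
    by (intro divide_nonneg_pos sum_nonneg mult_nonneg_nonneg qnorm_nonneg) auto
  moreover have "qnorm (p - qreal (D t / S t)) = R t / S t"
  proof -
    have "qsq (p - qreal (D t / S t)) = (R t / S t)\<^sup>2" using t(3) unfolding qG by simp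
    hence "qnorm (p - qreal (D t / S t)) = sqrt ((R t / S t)\<^sup>2)" by (simp only: qnorm_qsq)
    also have "\<dots> = R t / S t" using RS0 by (simp only: real_sqrt_abs abs_of_nonneg)
    finally show ?thesis .
  qed
  ultimately show ?thesis by (intro exI[of _ \<beta>']) simp
qed




lemma dsum_range:
  assumes n: "n \<ge> 1" and b1: "(\<Sum>i<n. (\<beta> i)\<^sup>2) = (1::real)"
  shows "dsum n dg \<beta> \<in> {Min (dg ` {..<n}) .. Max (dg ` {..<n})}"
proof -
  have fin: "finite (dg ` {..<n})" by simp
  have "Min (dg ` {..<n}) = (\<Sum>i<n. Min (dg ` {..<n}) * (\<beta> i)\<^sup>2)"
    using b1 by (simp add: sum_distrib_left[symmetric])
  also have "\<dots> \<le> dsum n dg \<beta>" unfolding dsum_def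
    by (intro sum_mono mult_right_mono) (auto intro: Min_le[OF fin])
  finally have 1: "Min (dg ` {..<n}) \<le> dsum n dg \<beta>" .
  have "dsum n dg \<beta> \<le> (\<Sum>i<n. Max (dg ` {..<n}) * (\<beta> i)\<^sup>2)" unfolding dsum_def
    by (intro sum_mono mult_right_mono) (auto intro: Max_ge[OF fin])
  also have "\<dots> = Max (dg ` {..<n})" using b1 by (simp add: sum_distrib_left[symmetric])
  finally show ?thesis using 1 by simp
qed

theorem theorem4p2:
  fixes n :: nat and dg :: "nat \<Rightarrow> real" and N :: "nat \<Rightarrow> nat \<Rightarrow> quat"
  assumes "n \<ge> 1"
    and "\<forall>i<n. \<forall>j<n. j \<le> i \<longrightarrow> N i j = 0"
    and "mat_is_tree n N"
  shows "num_range n (\<lambda>i j. (if i = j then qreal (dg i) else 0) + N i j) =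
    (\<Union>d\<in>{Min (dg ` {..<n}) .. Max (dg ` {..<n})}. qdisk (qreal d) (rfun n dg N d))"
proof
  have ac: "acyc {..<n} (mat_adj N)"
    using assms(3) unfolding mat_is_tree_def graph_has_cycle_def acyc_def by blast
  have Nii: "\<forall>i<n. N i i = 0" using assms(2) by auto
  show "num_range n (\<lambda>i j. (if i = j then qreal (dg i) else 0) + N i j) \<subseteq>
    (\<Union>d\<in>{Min (dg ` {..<n}) .. Max (dg ` {..<n})}. qdisk (qreal d) (rfun n dg N d))"
  proof
    fix p assume "p \<in> num_range n (\<lambda>i j. (if i = j then qreal (dg i) else 0) + N i j)"
    then obtain x where p: "p = (\<Sum>i<n. \<Sum>j<n. qcnj (x i) * ((if i = j then qreal (dg i) else 0) + N i j) * x j)"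
      and x1: "(\<Sum>i<n. qcnj (x i) * x i) = 1" unfolding num_range_def by blast
    define \<beta> where "\<beta> i = qnorm (x i)" for i
    have sq: "qsq (x i) = (\<beta> i)\<^sup>2" for i unfolding \<beta>_def by (simp add: qnorm_sq)
    have "qreal (\<Sum>i<n. (\<beta> i)\<^sup>2) = 1" using x1 by (simp add: qreal_sum cnj_mult_self sq)
    hence b1: "(\<Sum>i<n. (\<beta> i)\<^sup>2) = 1" by (simp add: qreal_eq_1)
    have b0: "\<forall>i<n. \<beta> i \<ge> 0" unfolding \<beta>_def using qnorm_nonneg by auto
    define Rq where "Rq = (\<Sum>i<n. \<Sum>j<n. qcnj (x i) * N i j * x j)"
    have pe: "p = qreal (dsum n dg \<beta>) + Rq" unfolding p expand_form Rq_def dsum_def by (simp add: sq)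
    have "qnorm Rq \<le> (\<Sum>i<n. \<Sum>j<n. qnorm (qcnj (x i) * N i j * x j))"
      unfolding Rq_def by (rule order_trans[OF qnorm_sum sum_mono[OF qnorm_sum]])
    also have "\<dots> = (\<Sum>i<n. \<Sum>j<n. \<beta> i * \<beta> j * qnorm (N i j))"
      unfolding \<beta>_def by (simp add: qnorm_mult qnorm_cnj mult_ac)
    also have "\<dots> = rho n N \<beta>" using Nii by (rule rho_full)
    also have "\<dots> \<le> rfun n dg N (dsum n dg \<beta>)" by (rule rfun_upper[OF b1 b0])
    finally have "p \<in> qdisk (qreal (dsum n dg \<beta>)) (rfun n dg N (dsum n dg \<beta>))"
      unfolding qdisk_def pe by simp
    thus "p \<in> (\<Union>d\<in>{Min (dg ` {..<n}) .. Max (dg ` {..<n})}. qdisk (qreal d) (rfun n dg N d))"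
      using dsum_range[OF assms(1) b1] by blast
  qed
  show "(\<Union>d\<in>{Min (dg ` {..<n}) .. Max (dg ` {..<n})}. qdisk (qreal d) (rfun n dg N d)) \<subseteq>
      num_range n (\<lambda>i j. (if i = j then qreal (dg i) else 0) + N i j)"
  proof
    fix p assume "p \<in> (\<Union>d\<in>{Min (dg ` {..<n}) .. Max (dg ` {..<n})}. qdisk (qreal d) (rfun n dg N d))"
    then obtain d where d: "d \<in> {Min (dg ` {..<n}) .. Max (dg ` {..<n})}"
      and pd: "qnorm (p - qreal d) \<le> rfun n dg N d" unfolding qdisk_def by blast
    obtain \<beta> where b: "(\<Sum>i<n. (\<beta> i)\<^sup>2) = 1" "\<forall>i<n. \<beta> i \<ge> 0" "dsum n dg \<beta> = d" "rho n N \<beta> = rfun n dg N d"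
      using attain[OF Sset_ne[OF assms(1) d]] by blast
    obtain \<beta>' where b': "(\<Sum>i<n. (\<beta>' i)\<^sup>2) = 1" "qnorm (p - qreal (dsum n dg \<beta>')) = rho n N \<beta>'"
      using ivt_step[OF assms(1) b(1,2), of p dg N] b pd by auto
    have "qreal (dsum n dg \<beta>') + (p - qreal (dsum n dg \<beta>')) \<in> num_range n (\<lambda>i j. (if i = j then qreal (dg i) else 0) + N i j)"
      by (rule realize[OF assms(2) ac b'])
    thus "p \<in> num_range n (\<lambda>i j. (if i = j then qreal (dg i) else 0) + N i j)" by simp
  qed
qed


end
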